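(* Consider a sequence of finite populations indexed by $n\to\infty$, each satisfying Assumption 1, Assumption 2 and the null hypothesis $H_0:\ T_i(1)=T_i(0)$ for all $i$, and condition on all potential event times. Then $$\sum_{k=1}^{K-1}\xi_{2k}=\tilde d^{1/2}\log n\cdot O_{\Pr}(1),$$ where $\xi_{2k}=\frac{D_k\,\mathbb{E}\{N_{1k}(N_k-N_{1k})\mid\boldsymbol{T}(1),\boldsymbol{T}(0),N_k\}}{N_k^2(N_k-1)}\big\{(N_k-D_k)-\mathbb{E}(N_k-D_k\mid\boldsymbol{T}(1),\boldsymbol{T}(0),N_k)\big\}$.
   Context: Unit $i$ ($1\le i\le n$) has potential event times $T_i(1),T_i(0)\ge 0$ (fixed constants), potential censoring times $C_i(1),C_i(0)\in[0,\infty]$, treatment indicator $Z_i\in\{0,1\}$; bold letters denote $n$-vectors. Assumption 1: conditional on all potential event and censoring times, the $Z_i$ are i.i.d. Bernoulli$(p_1)$, $p_1=1-p_0\in(0,1)$. Assumption 2: $(\boldsymbol{C}(1),\boldsymbol{C}(0))$ is independent of $(\boldsymbol{T}(1),\boldsymbol{T}(0))$ and the pairs $(C_i(1),C_i(0))$ are i.i.d. across $i$. Realized: $W_i=\min\{T_i,C_i\}$, $\Delta_i=\mathbb{1}(T_i\le C_i)$ with $T_i=Z_iT_i(1)+(1-Z_i)T_i(0)$, $C_i=Z_iC_i(1)+(1-Z_i)C_i(0)$. Let $t_1<\dots<t_K$ be the distinct values of $\{T_i(0)\}$, $d_k=\#\{i:T_i(0)=t_k\}$, $\tilde d=\max_kd_k$;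 $N_{1k}=\sum_iZ_i\mathbb{1}(W_i\ge t_k)$, $N_k=\sum_i\mathbb{1}(W_i\ge t_k)$, $D_k=\sum_i\Delta_i\mathbb{1}(W_i=t_k)$; convention $0/0:=0$. $X_n=a_nO_{\Pr}(1)$ means $X_n/a_n$ is bounded in probability as $n\to\infty$; all quantities may depend on $n$. *)

theory Defs
  imports "HOL-Probability.Probability"
begin

text \<open>Finite-population model under H0 (T_i(1) = T_i(0) = t i, fixed constants).
  Unit i carries the random triple (Z_i, C_i(1), C_i(0)) in bool x [0,inf] x [0,inf].\<close>

definition trial_space :: "nat \<Rightarrow> real \<Rightarrow> (ennreal \<times> ennreal) measure
      \<Rightarrow> (nat \<Rightarrow> bool \<times> ennreal \<times> ennreal) measure" where
  "trial_space n p G = PiM {..<n} (\<lambda>_. measure_pmf (bernoulli_pmf p) \<Otimes>\<^sub>M G)"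

definition realC :: "bool \<times> ennreal \<times> ennreal \<Rightarrow> ennreal" where
  "realC u = (if fst u then fst (snd u) else snd (snd u))"

definition obsW :: "(nat \<Rightarrow> real) \<Rightarrow> nat \<Rightarrow> (nat \<Rightarrow> bool \<times> ennreal \<times> ennreal) \<Rightarrow> ennreal" where
  "obsW t i \<omega> = min (ennreal (t i)) (realC (\<omega> i))"

definition obsDelta :: "(nat \<Rightarrow> real) \<Rightarrow> nat \<Rightarrow> (nat \<Rightarrow> bool \<times> ennreal \<times> ennreal) \<Rightarrow> bool" where
  "obsDelta t i \<omega> = (ennreal (t i) \<le> realC (\<omega> i))"

definition atRiskTrt :: "nat \<Rightarrow> (nat \<Rightarrow> real) \<Rightarrow> real \<Rightarrow> (nat \<Rightarrow> bool \<times> ennreal \<times> ennreal) \<Rightarrow> real" where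
  "atRiskTrt n t v \<omega> = real (card {i. i < n \<and> fst (\<omega> i) \<and> ennreal v \<le> obsW t i \<omega>})"

definition atRisk :: "nat \<Rightarrow> (nat \<Rightarrow> real) \<Rightarrow> real \<Rightarrow> (nat \<Rightarrow> bool \<times> ennreal \<times> ennreal) \<Rightarrow> real" where
  "atRisk n t v \<omega> = real (card {i. i < n \<and> ennreal v \<le> obsW t i \<omega>})"

definition events :: "nat \<Rightarrow> (nat \<Rightarrow> real) \<Rightarrow> real \<Rightarrow> (nat \<Rightarrow> bool \<times> ennreal \<times> ennreal) \<Rightarrow> real" where
  "events n t v \<omega> = real (card {i. i < n \<and> obsDelta t i \<omega> \<and> obsW t i \<omega> = ennreal v})"

text \<open>Elementary conditional expectation of X given a discrete random variable Y
  (evaluated at \<omega>); 0/0 = 0.\<close>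
definition condExpDisc :: "'a measure \<Rightarrow> ('a \<Rightarrow> real) \<Rightarrow> ('a \<Rightarrow> 'b) \<Rightarrow> 'a \<Rightarrow> real" where
  "condExpDisc M X Y \<omega> =
     (\<integral>\<omega>'. indicator {\<omega>' \<in> space M. Y \<omega>' = Y \<omega>} \<omega>' * X \<omega>' \<partial>M)
       / measure M {\<omega>' \<in> space M. Y \<omega>' = Y \<omega>}"

definition distinct_times :: "nat \<Rightarrow> (nat \<Rightarrow> real) \<Rightarrow> real set" where
  "distinct_times n t = t ` {..<n}"

definition tie_count :: "nat \<Rightarrow> (nat \<Rightarrow> real) \<Rightarrow> real \<Rightarrow> nat" where
  "tie_count n t v = card {i. i < n \<and> t i = v}"

definition max_tie :: "nat \<Rightarrow> (nat \<Rightarrow> real) \<Rightarrow> nat" where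
  "max_tie n t = Max (tie_count n t ` distinct_times n t)"

definition xi2 :: "(nat \<Rightarrow> bool \<times> ennreal \<times> ennreal) measure \<Rightarrow> nat \<Rightarrow> (nat \<Rightarrow> real) \<Rightarrow> real
      \<Rightarrow> (nat \<Rightarrow> bool \<times> ennreal \<times> ennreal) \<Rightarrow> real" where
  "xi2 M n t v \<omega> =
     events n t v \<omega>
       * condExpDisc M (\<lambda>\<omega>'. atRiskTrt n t v \<omega>' * (atRisk n t v \<omega>' - atRiskTrt n t v \<omega>')) (atRisk n t v) \<omega>
       / ((atRisk n t v \<omega>)\<^sup>2 * (atRisk n t v \<omega> - 1))
       * ((atRisk n t v \<omega> - events n t v \<omega>)
          - condExpDisc M (\<lambda>\<omega>'. atRisk n t v \<omega>' - events n t v \<omega>') (atRisk n t v) \<omega>)"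

text \<open>Sum over k = 1..K-1, i.e. over all distinct event times except the largest.\<close>
definition xi2_sum :: "(nat \<Rightarrow> bool \<times> ennreal \<times> ennreal) measure \<Rightarrow> nat \<Rightarrow> (nat \<Rightarrow> real)
      \<Rightarrow> (nat \<Rightarrow> bool \<times> ennreal \<times> ennreal) \<Rightarrow> real" where
  "xi2_sum M n t \<omega> = (\<Sum>v \<in> distinct_times n t - {Max (distinct_times n t)}. xi2 M n t v \<omega>)"

definition bounded_in_prob :: "(nat \<Rightarrow> 'a measure) \<Rightarrow> (nat \<Rightarrow> 'a \<Rightarrow> real) \<Rightarrow> bool" where
  "bounded_in_prob M X \<longleftrightarrow>
     (\<forall>e>0. \<exists>B. \<exists>N. \<forall>n\<ge>N. measure (M n) {\<omega> \<in> space (M n). B < \<bar>X n \<omega>\<bar>} \<le> e)"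

end

theory Submission
  imports Defs "HOL-Analysis.Harmonic_Numbers"
begin

locale trial =
  fixes n :: nat and p :: real and G :: "(ennreal \<times> ennreal) measure"
    and t :: "nat \<Rightarrow> real" and v :: real
  assumes G_prob: "prob_space G"
    and G_sets: "sets G = sets (borel \<Otimes>\<^sub>M borel)"
    and v_nonneg: "0 \<le> v"
    and t_nonneg: "\<And>i. i < n \<Longrightarrow> 0 \<le> t i"
begin

abbreviation "CS \<equiv> measure_pmf (bernoulli_pmf p) \<Otimes>\<^sub>M G"
abbreviation "\<Omega> \<equiv> trial_space n p G"

definition "A = {i. i < n \<and> v \<le> t i}"
definition "T = {i. i < n \<and> t i = v}"
definition "X i \<omega> \<longleftrightarrow> ennreal v \<le> realC (\<omega> i)"
definition "K \<omega> = {i\<in>A. X i \<omega>}"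
definition "Nn \<omega> = card (K \<omega>)"
definition "Dn \<omega> = card (K \<omega> \<inter> T)"

lemma finA: "finite A" and finT: "finite T" and TA: "T \<subseteq> A" and An: "A \<subseteq> {..<n}"
  by (auto simp: A_def T_def)

lemma finK: "finite (K \<omega>)" and KA: "K \<omega> \<subseteq> A"
  using finA by (auto simp: K_def)

lemma Nn_le: "Nn \<omega> \<le> card A"
  unfolding Nn_def using finA KA by (intro card_mono) auto

lemma Dn_le_Nn: "Dn \<omega> \<le> Nn \<omega>"
  unfolding Nn_def Dn_def using finK by (intro card_mono) auto

lemma Dn_le: "Dn \<omega> \<le> card T"
  unfolding Dn_def using finT by (intro card_mono) auto

lemma atRisk_eq: "atRisk n t v \<omega> = real (Nn \<omega>)"
proof -
  have "{i. i < n \<and> ennreal v \<le> obsW t i \<omega>} = K \<omega>"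
    using t_nonneg v_nonneg
    by (auto simp: obsW_def K_def A_def X_def ennreal_le_iff)
  then show ?thesis by (simp add: atRisk_def Nn_def)
qed

lemma events_eq: "events n t v \<omega> = real (Dn \<omega>)"
proof -
  have "{i. i < n \<and> obsDelta t i \<omega> \<and> obsW t i \<omega> = ennreal v} = K \<omega> \<inter> T"
  proof (intro set_eqI iffI)
    fix i assume "i \<in> {i. i < n \<and> obsDelta t i \<omega> \<and> obsW t i \<omega> = ennreal v}"
    then have i: "i < n" "ennreal (t i) \<le> realC (\<omega> i)" "min (ennreal (t i)) (realC (\<omega> i)) = ennreal v"
      by (auto simp: obsDelta_def obsW_def)
    then have "ennreal (t i) = ennreal v" by (simp add: min_absorb1)
    then have "t i = v" using t_nonneg[OF i(1)] v_nonneg by simp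
    then show "i \<in> K \<omega> \<inter> T" using i by (auto simp: K_def A_def T_def X_def)
  next
    fix i assume "i \<in> K \<omega> \<inter> T"
    then show "i \<in> {i. i < n \<and> obsDelta t i \<omega> \<and> obsW t i \<omega> = ennreal v}"
      by (auto simp: K_def A_def T_def X_def obsDelta_def obsW_def min_absorb1)
  qed
  then show ?thesis by (simp add: events_def Dn_def)
qed

lemma atRiskTrt_bounds: "0 \<le> atRiskTrt n t v \<omega>" "atRiskTrt n t v \<omega> \<le> atRisk n t v \<omega>"
  unfolding atRiskTrt_def atRisk_def by (auto intro!: card_mono)

lemma prob_CS: "prob_space CS"
  using G_prob by (intro prob_space_pair) (auto simp: prob_space_measure_pmf)

lemma prob_Omega: "prob_space \<Omega>"
  unfolding trial_space_def using prob_CS by (intro prob_space_PiM) auto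

lemma realC_meas: "realC \<in> borel_measurable CS"
proof -
  have f: "fst \<in> measurable CS (count_space UNIV)"
    using measurable_fst[of "measure_pmf (bernoulli_pmf p)" G]
    by (simp add: measurable_cong_sets[OF refl sets_measure_pmf_count_space])
  have "(\<lambda>x. fst x) \<in> borel_measurable G"
    unfolding measurable_cong_sets[OF G_sets refl] by simp
  then have s1: "(\<lambda>u. fst (snd u)) \<in> borel_measurable CS"
    by (rule measurable_compose[OF measurable_snd])
  have "(\<lambda>x. snd x) \<in> borel_measurable G"
    unfolding measurable_cong_sets[OF G_sets refl] by simp
  then have s2: "(\<lambda>u. snd (snd u)) \<in> borel_measurable CS"
    by (rule measurable_compose[OF measurable_snd])
  have "(\<lambda>u. if fst u then fst (snd u) else snd (snd u)) \<in> borel_measurable CS"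
    using f s1 s2 by (intro measurable_If) (auto simp: Measurable.pred_def)
  then show ?thesis by (simp add: realC_def[abs_def])
qed

lemma X_meas: "i < n \<Longrightarrow> Measurable.pred \<Omega> (X i)"
proof -
  assume i: "i < n"
  have c: "(\<lambda>\<omega>. \<omega> i) \<in> measurable \<Omega> CS"
    unfolding trial_space_def using i by (intro measurable_component_singleton) auto
  have [measurable]: "(\<lambda>\<omega>. realC (\<omega> i)) \<in> borel_measurable \<Omega>"
    by (rule measurable_compose[OF c realC_meas])
  have "{\<omega>\<in>space \<Omega>. ennreal v \<le> realC (\<omega> i)} \<in> sets \<Omega>"
    by (rule borel_measurable_le) simp_all
  then show ?thesis unfolding X_def[abs_def] by (simp add: Measurable.pred_def)
qed

lemma card_filter_sum: "finite S \<Longrightarrow> real (card {i\<in>S. P i}) = (\<Sum>i\<in>S. if P i then 1 else 0)"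
  by (simp add: sum.If_cases Int_def conj_commute)

lemma Nn_real: "real (Nn \<omega>) = (\<Sum>i\<in>A. if X i \<omega> then 1 else 0)"
  unfolding Nn_def K_def by (rule card_filter_sum[OF finA])

lemma Dn_real: "real (Dn \<omega>) = (\<Sum>i\<in>T. if X i \<omega> then 1 else 0)"
proof -
  have "K \<omega> \<inter> T = {i\<in>T. X i \<omega>}" using TA by (auto simp: K_def)
  then show ?thesis unfolding Dn_def by (simp add: card_filter_sum[OF finT])
qed

lemma X_meas': "i \<in> A \<Longrightarrow> Measurable.pred \<Omega> (X i)"
  using X_meas An by auto

lemma Nn_real_meas: "(\<lambda>\<omega>. real (Nn \<omega>)) \<in> borel_measurable \<Omega>"
proof -
  have "(\<lambda>\<omega>. (\<Sum>i\<in>A. if X i \<omega> then 1 else 0::real)) \<in> borel_measurable \<Omega>"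
    using X_meas' by (intro borel_measurable_sum measurable_If) auto
  then show ?thesis by (simp add: Nn_real)
qed

lemma Dn_real_meas: "(\<lambda>\<omega>. real (Dn \<omega>)) \<in> borel_measurable \<Omega>"
proof -
  have "(\<lambda>\<omega>. (\<Sum>i\<in>T. if X i \<omega> then 1 else 0::real)) \<in> borel_measurable \<Omega>"
    using X_meas' TA by (intro borel_measurable_sum measurable_If) auto
  then show ?thesis by (simp add: Dn_real)
qed

lemma nat_meas_of_real:
  fixes f :: "_ \<Rightarrow> nat"
  assumes "(\<lambda>\<omega>. real (f \<omega>)) \<in> borel_measurable M"
  shows "f \<in> measurable M (count_space UNIV)"
proof (subst measurable_count_space_eq2_countable, intro conjI ballI)
  fix a :: nat
  have "f -` {a} \<inter> space M = {\<omega>\<in>space M. real (f \<omega>) = real a}" by auto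
  also have "\<dots> \<in> sets M"
    using assms by measurable
  finally show "f -` {a} \<inter> space M \<in> sets M" .
qed auto

lemma Nn_meas: "Nn \<in> measurable \<Omega> (count_space UNIV)"
  by (rule nat_meas_of_real[OF Nn_real_meas])

lemma Dn_meas: "Dn \<in> measurable \<Omega> (count_space UNIV)"
  by (rule nat_meas_of_real[OF Dn_real_meas])

lemma ND_meas: "(\<lambda>\<omega>. h (Nn \<omega>) (Dn \<omega>)) \<in> measurable \<Omega> N"
  if "\<And>a b. h a b \<in> space N"
proof (rule measurable_compose_countable[OF _ Nn_meas])
  fix i show "(\<lambda>\<omega>. h i (Dn \<omega>)) \<in> measurable \<Omega> N"
    by (rule measurable_compose_countable[OF _ Dn_meas]) (use that in auto)
qed

definition "Ev m F = {\<omega>\<in>space \<Omega>. F \<subseteq> K \<omega> \<and> Nn \<omega> = m}"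

lemma Ev_sets: "F \<subseteq> A \<Longrightarrow> Ev m F \<in> sets \<Omega>"
proof -
  assume F: "F \<subseteq> A"
  have fin: "finite F" using F finA finite_subset by auto
  have eq: "Ev m F = {\<omega>\<in>space \<Omega>. Nn \<omega> = m} \<inter> (\<Inter>i\<in>F. {\<omega>\<in>space \<Omega>. X i \<omega>}) \<inter> space \<Omega>"
    using F by (auto simp: Ev_def K_def)
  have s1: "{\<omega>\<in>space \<Omega>. Nn \<omega> = m} \<in> sets \<Omega>"
    using ND_meas[of "\<lambda>a b. a = m" "count_space UNIV"] by (simp add: Measurable.pred_def)
  have s2: "(\<Inter>i\<in>F. {\<omega>\<in>space \<Omega>. X i \<omega>}) \<inter> space \<Omega> \<in> sets \<Omega>"
  proof (cases "F = {}")
    case True then show ?thesis by simp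
  next
    case False
    have "(\<Inter>i\<in>F. {\<omega>\<in>space \<Omega>. X i \<omega>}) \<in> sets \<Omega>"
      using fin False F X_meas' by (intro sets.finite_INT) (auto simp: Measurable.pred_def)
    then show ?thesis by auto
  qed
  show ?thesis unfolding eq using s1 s2 by (metis (no_types, lifting) Int_assoc sets.Int)
qed

definition sw :: "nat \<Rightarrow> nat \<Rightarrow> nat \<Rightarrow> nat" where
  "sw a b i = (if i = a then b else if i = b then a else i)"

lemma sw_sw[simp]: "sw a b (sw a b i) = i"
  by (simp add: sw_def)

lemma inj_sw: "inj (sw a b)"
  by (metis injI sw_sw)

lemma sw_image_image[simp]: "sw a b ` sw a b ` S = S"
  by (force simp: image_iff)

lemma sw_image_eq: "sw a b ` S = {i. sw a b i \<in> S}"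
proof (intro set_eqI iffI)
  fix x assume "x \<in> sw a b ` S"
  then obtain y where "y \<in> S" "x = sw a b y" by blast
  then show "x \<in> {i. sw a b i \<in> S}" by simp
next
  fix x assume "x \<in> {i. sw a b i \<in> S}"
  then have "sw a b (sw a b x) \<in> sw a b ` S" by blast
  then show "x \<in> sw a b ` S" by simp
qed

lemma sw_mem_A: "a \<in> A \<Longrightarrow> b \<in> A \<Longrightarrow> sw a b i \<in> A \<longleftrightarrow> i \<in> A"
  by (auto simp: sw_def)

lemma measure_Ev_sw:
  assumes a: "a \<in> A" and b: "b \<in> A" and F: "F \<subseteq> A"
  shows "measure \<Omega> (Ev m (sw a b ` F)) = measure \<Omega> (Ev m F)"
proof -
  let ?I = "{..<n}"
  define \<phi> :: "(nat \<Rightarrow> bool \<times> ennreal \<times> ennreal) \<Rightarrow> _" where "\<phi> = (\<lambda>\<omega>. \<lambda>i\<in>?I. \<omega> (sw a b i))"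
  have swI: "i \<in> ?I \<Longrightarrow> sw a b i \<in> ?I" for i using a b An by (auto simp: sw_def)
  have D: "distr \<Omega> \<Omega> \<phi> = \<Omega>"
    unfolding trial_space_def \<phi>_def
    by (rule distr_PiM_reindex[OF prob_CS inj_on_subset[OF inj_sw subset_UNIV] Pi_I[OF swI]])
  have meas: "\<phi> \<in> measurable \<Omega> \<Omega>"
    unfolding trial_space_def \<phi>_def
    by (intro measurable_restrict measurable_component_singleton swI) auto
  have sp: "\<omega> \<in> space \<Omega> \<Longrightarrow> \<phi> \<omega> \<in> space \<Omega>" for \<omega>
    using measurable_space[OF meas] by blast
  have K\<phi>: "K (\<phi> \<omega>) = sw a b ` K \<omega>" for \<omega>
  proof -
    have "i \<in> K (\<phi> \<omega>) \<longleftrightarrow> sw a b i \<in> K \<omega>" for i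
    proof (cases "i \<in> A")
      case True
      then have "i < n" using An by auto
      then have "\<phi> \<omega> i = \<omega> (sw a b i)" by (simp add: \<phi>_def)
      then show ?thesis using True sw_mem_A[OF a b, of i] by (simp add: K_def X_def)
    next
      case False
      then show ?thesis using sw_mem_A[OF a b, of i] by (simp add: K_def)
    qed
    then show ?thesis unfolding sw_image_eq by blast
  qed
  have pre: "\<phi> -` Ev m F \<inter> space \<Omega> = Ev m (sw a b ` F)"
  proof -
    have "F \<subseteq> sw a b ` S \<longleftrightarrow> sw a b ` F \<subseteq> S" for S
      unfolding sw_image_eq by auto
    moreover have "card (sw a b ` S) = card S" for S
      using card_image[OF inj_on_subset[OF inj_sw subset_UNIV]] by simp
    ultimately show ?thesis
      using sp by (auto simp: Ev_def K\<phi> Nn_def)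
  qed
  have "measure \<Omega> (Ev m F) = measure (distr \<Omega> \<Omega> \<phi>) (Ev m F)"
    by (simp add: D)
  also have "\<dots> = measure \<Omega> (\<phi> -` Ev m F \<inter> space \<Omega>)"
    by (rule measure_distr[OF meas Ev_sets[OF F]])
  finally show ?thesis by (simp add: pre)
qed

lemma measure_Ev_card:
  assumes F: "F \<subseteq> A" and F': "F' \<subseteq> A" and c: "card F = card F'"
  shows "measure \<Omega> (Ev m F) = measure \<Omega> (Ev m F')"
  using F c
proof (induction "card (F - F')" arbitrary: F rule: less_induct)
  case less
  have finF: "finite F" and finF': "finite F'" using less.prems F' finA finite_subset by auto
  show ?case
  proof (cases "F = F'")
    case True then show ?thesis by simp
  next
    case False
    have "F - F' \<noteq> {}"
    proof
      assume "F - F' = {}"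
      then have "F \<subseteq> F'" by auto
      then have "F = F'" using card_subset_eq[OF finF'] less.prems by auto
      then show False using False by simp
    qed
    then obtain a where a: "a \<in> F" "a \<notin> F'" by auto
    have "F' - F \<noteq> {}"
    proof
      assume "F' - F = {}"
      then have "F' \<subseteq> F" by auto
      then have "F = F'" using card_subset_eq[OF finF] less.prems by auto
      then show False using False by simp
    qed
    then obtain b where b: "b \<in> F'" "b \<notin> F" by auto
    have aA: "a \<in> A" and bA: "b \<in> A" using a b less.prems F' by auto
    have img: "sw a b ` F = insert b (F - {a})"
      using a b by (auto simp: sw_def image_iff split: if_splits)
    have sub: "sw a b ` F \<subseteq> A" using img less.prems bA by auto
    have cardeq: "card (sw a b ` F) = card F'"
      using card_image[OF inj_on_subset[OF inj_sw subset_UNIV]] less.prems by simp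
    have "sw a b ` F - F' = (F - F') - {a}"
      using img a b by auto
    moreover have "card ((F - F') - {a}) < card (F - F')"
      using a finF by (intro card_Diff1_less) auto
    ultimately have "card (sw a b ` F - F') < card (F - F')" by simp
    then have "measure \<Omega> (Ev m (sw a b ` F)) = measure \<Omega> (Ev m F')"
      using less.hyps sub cardeq by blast
    then show ?thesis using measure_Ev_sw[OF aA bA less.prems(1)] by simp
  qed
qed

abbreviation "N0 \<equiv> card A"
abbreviation "d0 \<equiv> card T"

definition "pp m k = measure \<Omega> {\<omega>\<in>space \<Omega>. Nn \<omega> = m \<and> Dn \<omega> = k}"
definition "S m k = {\<omega>\<in>space \<Omega>. Nn \<omega> = m \<and> Dn \<omega> = k}"

lemma S_sets: "S m k \<in> sets \<Omega>"
  using ND_meas[of "\<lambda>a b. a = m \<and> b = k" "count_space UNIV"]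
  by (simp add: Measurable.pred_def S_def)

lemma d0_le: "d0 \<le> N0"
  using finA TA by (rule card_mono)

lemma pointwise_ND:
  fixes h :: "nat \<Rightarrow> nat \<Rightarrow> real"
  assumes "\<omega> \<in> space \<Omega>"
  shows "h (Nn \<omega>) (Dn \<omega>) = (\<Sum>m\<le>N0. \<Sum>k\<le>N0. h m k * indicator (S m k) \<omega>)"
proof -
  have "(\<Sum>m\<le>N0. \<Sum>k\<le>N0. h m k * indicator (S m k) \<omega>)
      = (\<Sum>m\<le>N0. \<Sum>k\<le>N0. if m = Nn \<omega> then (if k = Dn \<omega> then h m k else 0) else 0)"
    using assms by (intro sum.cong refl) (auto simp: S_def indicator_def)
  also have "\<dots> = (\<Sum>m\<le>N0. if m = Nn \<omega> then (\<Sum>k\<le>N0. if k = Dn \<omega> then h m k else 0) else 0)"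
    by (intro sum.cong refl) auto
  also have "\<dots> = h (Nn \<omega>) (Dn \<omega>)"
    using Nn_le[of \<omega>] Dn_le_Nn[of \<omega>] by (simp add: sum.delta)
  finally show ?thesis by simp
qed

lemma emeas_fin: "emeasure \<Omega> B \<noteq> \<infinity>"
proof -
  interpret P: prob_space \<Omega> by (rule prob_Omega)
  show ?thesis using P.emeasure_finite by simp
qed

lemma emeas_lt: "emeasure \<Omega> B < \<infinity>"
  using emeas_fin by (simp add: less_top[symmetric])

lemma S_sub: "S m k \<inter> space \<Omega> = S m k"
  by (auto simp: S_def)

lemma integrable_ND: fixes h :: "nat \<Rightarrow> nat \<Rightarrow> real" shows "integrable \<Omega> (\<lambda>\<omega>. h (Nn \<omega>) (Dn \<omega>))"
proof -
  have "integrable \<Omega> (\<lambda>\<omega>. \<Sum>m\<le>N0. \<Sum>k\<le>N0. h m k * indicator (S m k) \<omega>)"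
    using S_sets emeas_lt by (intro Bochner_Integration.integrable_sum integrable_mult_right) (auto intro: integrable_real_indicator)
  moreover have "integrable \<Omega> (\<lambda>\<omega>. h (Nn \<omega>) (Dn \<omega>)) \<longleftrightarrow> integrable \<Omega> (\<lambda>\<omega>. \<Sum>m\<le>N0. \<Sum>k\<le>N0. h m k * indicator (S m k) \<omega>)"
    by (rule Bochner_Integration.integrable_cong) (simp_all add: pointwise_ND)
  ultimately show ?thesis by simp
qed

lemma integral_ND: fixes h :: "nat \<Rightarrow> nat \<Rightarrow> real" shows "(\<integral>\<omega>. h (Nn \<omega>) (Dn \<omega>) \<partial>\<Omega>) = (\<Sum>m\<le>N0. \<Sum>k\<le>N0. h m k * pp m k)"
proof -
  have "(\<integral>\<omega>. h (Nn \<omega>) (Dn \<omega>) \<partial>\<Omega>) = (\<integral>\<omega>. (\<Sum>m\<le>N0. \<Sum>k\<le>N0. h m k * indicator (S m k) \<omega>) \<partial>\<Omega>)"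
    by (rule Bochner_Integration.integral_cong[OF refl]) (simp add: pointwise_ND)
  also have "\<dots> = (\<Sum>m\<le>N0. \<Sum>k\<le>N0. h m k * pp m k)"
  proof -
    have int: "integrable \<Omega> (\<lambda>\<omega>. h m k * indicator (S m k) \<omega>)" for m k
      using S_sets emeas_lt by (intro integrable_mult_right) (auto intro: integrable_real_indicator)
    have int2: "integrable \<Omega> (\<lambda>\<omega>. \<Sum>k\<le>N0. h m k * indicator (S m k) \<omega>)" for m
      using int by (intro Bochner_Integration.integrable_sum) auto
    show ?thesis
      by (simp only: Bochner_Integration.integral_sum int int2 integral_mult_right_zero Bochner_Integration.integral_indicator S_sub pp_def S_def[symmetric])
  qed
  finally show ?thesis .
qed

definition "PN m = (\<Sum>k\<le>N0. pp m k)"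

definition "Sub B r = {F. F \<subseteq> B \<and> card F = r}"

lemma Ev_sub: "Ev m F \<inter> space \<Omega> = Ev m F"
  by (auto simp: Ev_def)

lemma sub_pointwise:
  assumes \<omega>: "\<omega> \<in> space \<Omega>" and B: "B \<subseteq> A"
  shows "real (card (K \<omega> \<inter> B) choose r) * (if Nn \<omega> = m then 1 else 0)
       = (\<Sum>F\<in>Sub B r. indicator (Ev m F) \<omega>)"
proof -
  have finB: "finite B" using B finA finite_subset by auto
  have finSub: "finite (Sub B r)" unfolding Sub_def using finB by auto
  have "(\<Sum>F\<in>Sub B r. indicator (Ev m F) \<omega> :: real)
      = (\<Sum>F\<in>Sub B r. if F \<subseteq> K \<omega> \<and> Nn \<omega> = m then 1 else 0)"
    using \<omega> by (intro sum.cong refl) (auto simp: indicator_def Ev_def)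
  also have "\<dots> = real (card {F\<in>Sub B r. F \<subseteq> K \<omega> \<and> Nn \<omega> = m})"
    using card_filter_sum[OF finSub, of "\<lambda>F. F \<subseteq> K \<omega> \<and> Nn \<omega> = m"] by simp
  also have "{F\<in>Sub B r. F \<subseteq> K \<omega> \<and> Nn \<omega> = m} = (if Nn \<omega> = m then {F. F \<subseteq> K \<omega> \<inter> B \<and> card F = r} else {})"
    by (auto simp: Sub_def)
  also have "real (card \<dots>) = real (card (K \<omega> \<inter> B) choose r) * (if Nn \<omega> = m then 1 else 0)"
  proof -
    have "card {F. F \<subseteq> K \<omega> \<inter> B \<and> card F = r} = card (K \<omega> \<inter> B) choose r"
      using finK[of \<omega>] by (intro n_subsets) auto
    then show ?thesis by simp
  qed
  finally show ?thesis by simp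
qed

lemma sub_integral:
  assumes B: "B \<subseteq> A"
  shows "(\<integral>\<omega>. real (card (K \<omega> \<inter> B) choose r) * (if Nn \<omega> = m then 1 else 0) \<partial>\<Omega>)
       = (\<Sum>F\<in>Sub B r. measure \<Omega> (Ev m F))"
proof -
  have sets: "F \<in> Sub B r \<Longrightarrow> Ev m F \<in> sets \<Omega>" for F
    using B by (intro Ev_sets) (auto simp: Sub_def)
  have "(\<integral>\<omega>. real (card (K \<omega> \<inter> B) choose r) * (if Nn \<omega> = m then 1 else 0) \<partial>\<Omega>)
      = (\<integral>\<omega>. (\<Sum>F\<in>Sub B r. indicator (Ev m F) \<omega>) \<partial>\<Omega>)"
    by (rule Bochner_Integration.integral_cong[OF refl]) (simp add: sub_pointwise[OF _ B])
  also have "\<dots> = (\<Sum>F\<in>Sub B r. measure \<Omega> (Ev m F))"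
    using sets emeas_lt
    by (simp add: Bochner_Integration.integral_sum integrable_real_indicator Ev_sub)
  finally show ?thesis .
qed

lemma sub_const:
  assumes B: "B \<subseteq> A" and F0: "F0 \<in> Sub A r"
  shows "(\<Sum>F\<in>Sub B r. measure \<Omega> (Ev m F)) = real (card B choose r) * measure \<Omega> (Ev m F0)"
proof -
  have finB: "finite B" using B finA finite_subset by auto
  have "(\<Sum>F\<in>Sub B r. measure \<Omega> (Ev m F)) = (\<Sum>F\<in>Sub B r. measure \<Omega> (Ev m F0))"
    using B F0 by (intro sum.cong refl measure_Ev_card) (auto simp: Sub_def)
  also have "\<dots> = real (card (Sub B r)) * measure \<Omega> (Ev m F0)" by simp
  also have "card (Sub B r) = card B choose r"
    unfolding Sub_def using finB by (rule n_subsets)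
  finally show ?thesis by simp
qed

lemma moment_T: "(\<integral>\<omega>. real (card (K \<omega> \<inter> T) choose r) * (if Nn \<omega> = m then 1 else 0) \<partial>\<Omega>)
    = (\<Sum>k\<le>N0. real (k choose r) * pp m k)" if m: "m \<le> N0"
proof -
  have "(\<integral>\<omega>. real (card (K \<omega> \<inter> T) choose r) * (if Nn \<omega> = m then 1 else 0) \<partial>\<Omega>)
      = (\<integral>\<omega>. (\<lambda>a b. real (b choose r) * (if a = m then 1 else 0)) (Nn \<omega>) (Dn \<omega>) \<partial>\<Omega>)"
    by (simp add: Dn_def)
  also have "\<dots> = (\<Sum>m'\<le>N0. \<Sum>k\<le>N0. real (k choose r) * (if m' = m then 1 else 0) * pp m' k)"
    by (rule integral_ND)
  also have "\<dots> = (\<Sum>m'\<le>N0. if m' = m then (\<Sum>k\<le>N0. real (k choose r) * pp m k) else 0)"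
    by (intro sum.cong refl) auto
  also have "\<dots> = (\<Sum>k\<le>N0. real (k choose r) * pp m k)"
    using m by (subst sum.delta) auto
  finally show ?thesis .
qed

lemma moment_A: "(\<integral>\<omega>. real (card (K \<omega> \<inter> A) choose r) * (if Nn \<omega> = m then 1 else 0) \<partial>\<Omega>)
    = real (m choose r) * PN m" if m: "m \<le> N0"
proof -
  have KA': "K \<omega> \<inter> A = K \<omega>" for \<omega> using KA by auto
  have "(\<integral>\<omega>. real (card (K \<omega> \<inter> A) choose r) * (if Nn \<omega> = m then 1 else 0) \<partial>\<Omega>)
      = (\<integral>\<omega>. (\<lambda>a b. real (a choose r) * (if a = m then 1 else 0)) (Nn \<omega>) (Dn \<omega>) \<partial>\<Omega>)"
    by (simp add: Nn_def KA')
  also have "\<dots> = (\<Sum>m'\<le>N0. \<Sum>k\<le>N0. real (m' choose r) * (if m' = m then 1 else 0) * pp m' k)"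
    by (rule integral_ND)
  also have "\<dots> = (\<Sum>m'\<le>N0. if m' = m then real (m choose r) * PN m else 0)"
    by (intro sum.cong refl) (auto simp: PN_def sum_distrib_left)
  also have "\<dots> = real (m choose r) * PN m"
    using m by (subst sum.delta) auto
  finally show ?thesis .
qed

lemma moment_general:
  assumes m: "m \<le> N0"
  shows "real (N0 choose r) * (\<Sum>k\<le>N0. real (k choose r) * pp m k)
       = real (d0 choose r) * real (m choose r) * PN m"
proof (cases "r \<le> N0")
  case True
  obtain F0 where F0: "F0 \<subseteq> A" "card F0 = r"
    using obtain_subset_with_card_n[OF True] by metis
  then have F0S: "F0 \<in> Sub A r" by (simp add: Sub_def)
  have eT: "(\<Sum>k\<le>N0. real (k choose r) * pp m k) = real (d0 choose r) * measure \<Omega> (Ev m F0)"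
    using moment_T[OF m, of r] sub_integral[OF TA, of r m] sub_const[OF TA F0S, of m] by simp
  have eA: "real (m choose r) * PN m = real (N0 choose r) * measure \<Omega> (Ev m F0)"
    using moment_A[OF m, of r] sub_integral[OF order_refl, of r m] sub_const[OF order_refl F0S, of m] by simp
  have "real (N0 choose r) * (\<Sum>k\<le>N0. real (k choose r) * pp m k)
      = real (d0 choose r) * (real (N0 choose r) * measure \<Omega> (Ev m F0))"
    unfolding eT by simp
  also have "\<dots> = real (d0 choose r) * (real (m choose r) * PN m)" by (simp only: eA)
  finally show ?thesis by simp
next
  case False
  then have "N0 < r" "d0 < r" using d0_le by auto
  then show ?thesis by (simp add: binomial_eq_0)
qed

lemma pp_nonneg: "0 \<le> pp m k" by (simp add: pp_def)

lemma PN_nonneg: "0 \<le> PN m" by (simp add: PN_def pp_nonneg sum_nonneg)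

lemma pp_zero: "d0 < k \<Longrightarrow> pp m k = 0"
proof -
  assume "d0 < k"
  then have e: "{\<omega>\<in>space \<Omega>. Nn \<omega> = m \<and> Dn \<omega> = k} = {}" using Dn_le by (auto simp: not_le[symmetric])
  show ?thesis unfolding pp_def e by simp
qed

lemma choose2_real: "2 * real (k choose 2) = real k * (real k - 1)"
proof (induction k)
  case 0 then show ?case by simp
next
  case (Suc k)
  have "Suc k choose 2 = k + (k choose 2)"
    using binomial_Suc_Suc[of k 1] by (simp add: numeral_2_eq_2)
  then show ?case using Suc by (simp add: algebra_simps)
qed

lemma moment1:
  assumes m: "m \<le> N0" and d: "1 \<le> d0"
  shows "(\<Sum>k\<le>N0. real k * pp m k) = real m * real d0 / real N0 * PN m"
proof -
  have N0: "0 < real N0" using d d0_le by simp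
  have "real N0 * (\<Sum>k\<le>N0. real k * pp m k) = real d0 * real m * PN m"
    using moment_general[OF m, of 1] by simp
  then show ?thesis using N0 by (simp add: field_simps)
qed

lemma moment2:
  assumes m: "m \<le> N0" and d: "1 \<le> d0"
  shows "2 * (\<Sum>k\<le>N0. real (k choose 2) * pp m k) \<le> (real m * real d0 / real N0)^2 * PN m"
proof (cases "d0 \<le> 1")
  case True
  have "(\<Sum>k\<le>N0. real (k choose 2) * pp m k) = 0"
  proof (intro sum.neutral ballI)
    fix k assume "k \<in> {..N0}"
    show "real (k choose 2) * pp m k = 0"
    proof (cases "k \<le> 1")
      case True then have "k choose 2 = 0" by (simp add: binomial_eq_0)
      then show ?thesis by simp
    next
      case False then show ?thesis using \<open>d0 \<le> 1\<close> pp_zero[of k m] by simp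
    qed
  qed
  then show ?thesis using PN_nonneg[of m] by simp
next
  case False
  then have d2: "2 \<le> d0" by simp
  then have N2: "2 \<le> N0" using d0_le by simp
  have e: "real (N0 choose 2) * (\<Sum>k\<le>N0. real (k choose 2) * pp m k)
       = real (d0 choose 2) * real (m choose 2) * PN m"
    by (rule moment_general[OF m])
  define Q where "Q = (\<Sum>k\<le>N0. real (k choose 2) * pp m k)"
  define P where "P = PN m"
  have P0: "0 \<le> P" using PN_nonneg by (simp add: P_def)
  have e2: "(real N0 * (real N0 - 1)) * (2 * Q) = (real d0 * (real d0 - 1)) * (real m * (real m - 1)) * P"
  proof -
    have "(real N0 * (real N0 - 1)) * (2 * Q) = 2 * (2 * real (N0 choose 2) * Q)"
      by (simp add: choose2_real)
    also have "\<dots> = (2 * real (d0 choose 2)) * (2 * real (m choose 2)) * P"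
      using e by (simp add: Q_def P_def)
    finally show ?thesis by (simp add: choose2_real)
  qed
  have rN: "2 \<le> real N0" using N2 by simp
  have rd: "real d0 \<le> real N0" "1 \<le> real d0" using d0_le d by simp_all
  have rm: "real m \<le> real N0" "0 \<le> real m" using m by simp_all
  have key: "(real d0 * (real d0 - 1)) * (real m * (real m - 1)) * (real N0)^2
      \<le> (real m * real d0)^2 * (real N0 * (real N0 - 1))"
  proof -
    have a: "(real d0 - 1) * (real m - 1) * real N0 \<le> real m * real d0 * (real N0 - 1) \<or> real m < 1"
    proof (cases "real m < 1")
      case False
      have "real m * real d0 \<le> real m * real N0" using rd rm by (simp add: mult_left_mono)
      moreover have "real N0 \<le> real d0 * real N0" using rd rN by simp
      ultimately show ?thesis by (simp add: algebra_simps)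
    qed simp
    show ?thesis
    proof (cases "real m < 1")
      case True
      then have "m = 0" by simp
      then show ?thesis by simp
    next
      case False
      then have a': "(real d0 - 1) * (real m - 1) * real N0 \<le> real m * real d0 * (real N0 - 1)" using a by simp
      have nn: "0 \<le> real d0 * real m * real N0" by simp
      have "(real d0 * (real d0 - 1)) * (real m * (real m - 1)) * (real N0)^2
          = (real d0 * real m * real N0) * ((real d0 - 1) * (real m - 1) * real N0)"
        by (simp add: power2_eq_square algebra_simps)
      also have "\<dots> \<le> (real d0 * real m * real N0) * (real m * real d0 * (real N0 - 1))"
        by (rule mult_left_mono[OF a' nn])
      also have "\<dots> = (real m * real d0)^2 * (real N0 * (real N0 - 1))"
        by (simp add: power2_eq_square algebra_simps)
      finally show ?thesis .
    qed
  qed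
  have pos: "0 < real N0 * (real N0 - 1)" using rN by simp
  have "(real N0 * (real N0 - 1)) * ((real N0)^2 * (2 * Q))
      = (real N0 * (real N0 - 1)) * (2 * Q) * (real N0)^2" by (simp add: algebra_simps)
  also have "\<dots> \<le> (real m * real d0)^2 * (real N0 * (real N0 - 1)) * P"
    unfolding e2 using mult_right_mono[OF key P0] by (simp add: algebra_simps)
  also have "\<dots> = (real N0 * (real N0 - 1)) * ((real m * real d0)^2 * P)" by (simp add: algebra_simps)
  finally have "(real N0)^2 * (2 * Q) \<le> (real m * real d0)^2 * P"
    using pos by (simp only: mult_le_cancel_left_pos)
  then have "2 * Q \<le> (real m * real d0)^2 * P / (real N0)^2"
    using rN by (simp add: field_simps)
  then show ?thesis by (simp add: Q_def P_def power_divide)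
qed

definition "mu m = real m * real d0 / real N0"

lemma mu_nonneg: "0 \<le> mu m" by (simp add: mu_def)

lemma mu_le: "m \<le> N0 \<Longrightarrow> mu m \<le> real d0"
proof -
  assume m: "m \<le> N0"
  show ?thesis
  proof (cases "N0 = 0")
    case True then show ?thesis by (simp add: mu_def)
  next
    case False
    then have "real m * real d0 \<le> real N0 * real d0" using m by (simp add: mult_right_mono)
    then show ?thesis using False by (simp add: mu_def field_simps)
  qed
qed

lemma sum_pp_PN: "(\<Sum>k\<le>N0. pp m k) = PN m" by (simp add: PN_def)

lemma variance_bound:
  assumes m: "m \<le> N0" and d: "1 \<le> d0"
  shows "(\<Sum>k\<le>N0. (real k - mu m)^2 * pp m k) \<le> mu m * PN m"
proof -
  define \<mu> where "\<mu> = mu m"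
  have m1: "(\<Sum>k\<le>N0. real k * pp m k) = \<mu> * PN m"
    using moment1[OF m d] by (simp add: \<mu>_def mu_def)
  have m2: "2 * (\<Sum>k\<le>N0. real (k choose 2) * pp m k) \<le> \<mu>^2 * PN m"
    using moment2[OF m d] by (simp add: \<mu>_def mu_def)
  have sq: "(\<Sum>k\<le>N0. (real k)^2 * pp m k) = 2 * (\<Sum>k\<le>N0. real (k choose 2) * pp m k) + (\<Sum>k\<le>N0. real k * pp m k)"
  proof -
    have "(real k)^2 * pp m k = 2 * real (k choose 2) * pp m k + real k * pp m k" for k
    proof -
      have "(real k)^2 = 2 * real (k choose 2) + real k"
        using choose2_real[of k] by (simp add: power2_eq_square algebra_simps)
      then show ?thesis by (simp add: distrib_right)
    qed
    then show ?thesis by (simp add: sum.distrib sum_distrib_left mult.assoc)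
  qed
  have "(\<Sum>k\<le>N0. (real k - \<mu>)^2 * pp m k)
      = (\<Sum>k\<le>N0. (real k)^2 * pp m k) - 2 * \<mu> * (\<Sum>k\<le>N0. real k * pp m k) + \<mu>^2 * (\<Sum>k\<le>N0. pp m k)"
    by (simp add: power2_diff algebra_simps sum.distrib sum_subtractf sum_distrib_left)
  also have "\<dots> \<le> \<mu> * PN m"
    using m1 m2 sq by (simp add: sum_pp_PN power2_eq_square algebra_simps)
  finally show ?thesis by (simp add: \<mu>_def)
qed

lemma pw_abs: 
  fixes k \<mu> :: real
  assumes "0 \<le> \<mu>" "0 \<le> k"
  shows "k * \<bar>\<mu> - k\<bar> \<le> (1 + sqrt \<mu> / 2) * (k - \<mu>)^2 + \<mu> * sqrt \<mu> / 2"
proof -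
  define s where "s = sqrt \<mu>"
  have s0: "0 \<le> s" and ss: "s * s = \<mu>" using assms by (simp_all add: s_def)
  define x where "x = k - \<mu>"
  have a: "k * \<bar>\<mu> - k\<bar> \<le> x^2 + \<mu> * \<bar>x\<bar>"
  proof -
    have "k * \<bar>\<mu> - k\<bar> = x * \<bar>x\<bar> + \<mu> * \<bar>x\<bar>" by (simp add: x_def algebra_simps abs_minus_commute)
    moreover have "x * \<bar>x\<bar> \<le> x^2" by (simp add: power2_eq_square abs_if)
    ultimately show ?thesis by simp
  qed
  have b: "\<mu> * \<bar>x\<bar> \<le> s / 2 * x^2 + \<mu> * s / 2"
  proof -
    have "0 \<le> s * (\<bar>x\<bar> - s)^2" using s0 by simp
    then have "0 \<le> s * x^2 - 2 * (s * s) * \<bar>x\<bar> + (s * s) * s"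
      by (simp add: power2_eq_square algebra_simps)
    then show ?thesis unfolding ss by (simp add: algebra_simps)
  qed
  show ?thesis using a b by (simp add: s_def x_def algebra_simps)
qed

lemma absdev_bound:
  assumes m: "m \<le> N0" and d: "1 \<le> d0"
  shows "(\<Sum>k\<le>N0. real k * \<bar>mu m - real k\<bar> * pp m k) \<le> mu m * (1 + sqrt (mu m)) * PN m"
proof -
  define \<mu> where "\<mu> = mu m"
  have "(\<Sum>k\<le>N0. real k * \<bar>\<mu> - real k\<bar> * pp m k)
      \<le> (\<Sum>k\<le>N0. ((1 + sqrt \<mu> / 2) * (real k - \<mu>)^2 + \<mu> * sqrt \<mu> / 2) * pp m k)"
    using pw_abs[of \<mu>] mu_nonneg pp_nonneg by (intro sum_mono mult_right_mono) (auto simp: \<mu>_def)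
  also have "\<dots> = (1 + sqrt \<mu> / 2) * (\<Sum>k\<le>N0. (real k - \<mu>)^2 * pp m k) + \<mu> * sqrt \<mu> / 2 * PN m"
    by (simp add: algebra_simps sum.distrib sum_distrib_left sum_pp_PN[symmetric])
  also have "\<dots> \<le> (1 + sqrt \<mu> / 2) * (\<mu> * PN m) + \<mu> * sqrt \<mu> / 2 * PN m"
    using variance_bound[OF m d] mu_nonneg[of m] by (intro add_right_mono mult_left_mono) (auto simp: \<mu>_def)
  also have "\<dots> = \<mu> * (1 + sqrt \<mu>) * PN m" by (simp add: algebra_simps)
  finally show ?thesis by (simp add: \<mu>_def)
qed

definition "cm m = (\<Sum>k\<le>N0. real k * pp m k) / PN m"
definition "gfun m k = (if 2 \<le> m \<and> 0 < PN m then real k * \<bar>cm m - real k\<bar> / (4 * (real m - 1)) else 0)"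

lemma gfun_nonneg: "0 \<le> gfun m k"
  by (simp add: gfun_def)

lemma Nm_sets: "{\<omega>\<in>space \<Omega>. Nn \<omega> = m} \<in> sets \<Omega>"
  using ND_meas[of "\<lambda>a b. a = m" "count_space UNIV"] by (simp add: Measurable.pred_def)

lemma cond_ND:
  fixes h :: "nat \<Rightarrow> nat \<Rightarrow> real"
  assumes m: "m \<le> N0"
  shows "(\<integral>\<omega>. indicator {\<omega>'\<in>space \<Omega>. Nn \<omega>' = m} \<omega> * h (Nn \<omega>) (Dn \<omega>) \<partial>\<Omega>) = (\<Sum>k\<le>N0. h m k * pp m k)"
proof -
  have "(\<integral>\<omega>. indicator {\<omega>'\<in>space \<Omega>. Nn \<omega>' = m} \<omega> * h (Nn \<omega>) (Dn \<omega>) \<partial>\<Omega>)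
      = (\<integral>\<omega>. (\<lambda>a b. (if a = m then 1 else 0) * h a b) (Nn \<omega>) (Dn \<omega>) \<partial>\<Omega>)"
    by (rule Bochner_Integration.integral_cong[OF refl]) (simp add: indicator_def)
  also have "\<dots> = (\<Sum>m'\<le>N0. \<Sum>k\<le>N0. (if m' = m then 1 else 0) * h m' k * pp m' k)"
    by (rule integral_ND)
  also have "\<dots> = (\<Sum>m'\<le>N0. if m' = m then (\<Sum>k\<le>N0. h m k * pp m k) else 0)"
    by (intro sum.cong refl) auto
  also have "\<dots> = (\<Sum>k\<le>N0. h m k * pp m k)"
    using m by (subst sum.delta) auto
  finally show ?thesis .
qed

lemma PN_measure:
  assumes m: "m \<le> N0"
  shows "measure \<Omega> {\<omega>\<in>space \<Omega>. Nn \<omega> = m} = PN m"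
proof -
  have "measure \<Omega> {\<omega>\<in>space \<Omega>. Nn \<omega> = m} = (\<integral>\<omega>. indicator {\<omega>'\<in>space \<Omega>. Nn \<omega>' = m} \<omega> * (\<lambda>a b. 1) (Nn \<omega>) (Dn \<omega>) \<partial>\<Omega>)"
    using Nm_sets by (simp add: Int_absorb2 subset_iff)
  also have "\<dots> = PN m"
    using cond_ND[OF m, of "\<lambda>a b. 1"] by (simp add: PN_def)
  finally show ?thesis .
qed

lemma sum_PN: "(\<Sum>m\<le>N0. PN m) = 1"
proof -
  interpret P: prob_space \<Omega> by (rule prob_Omega)
  have "(\<integral>\<omega>. (\<lambda>a b. 1::real) (Nn \<omega>) (Dn \<omega>) \<partial>\<Omega>) = (\<Sum>m\<le>N0. \<Sum>k\<le>N0. 1 * pp m k)"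
    by (rule integral_ND)
  then show ?thesis by (simp add: PN_def P.prob_space)
qed

lemma cm_eq: "m \<le> N0 \<Longrightarrow> 1 \<le> d0 \<Longrightarrow> 0 < PN m \<Longrightarrow> cm m = mu m"
  using moment1[of m] by (simp add: cm_def mu_def)

lemma EG_bound:
  assumes d: "1 \<le> d0" and dt: "d0 \<le> dt"
  shows "(\<integral>\<omega>. gfun (Nn \<omega>) (Dn \<omega>) \<partial>\<Omega>) \<le> real d0 / real N0 * sqrt (real dt)"
proof -
  define c where "c = real d0 / real N0 * sqrt (real dt)"
  have N0pos: "0 < real N0" using d d0_le by simp
  have c0: "0 \<le> c" by (simp add: c_def)
  have each: "(\<Sum>k\<le>N0. gfun m k * pp m k) \<le> c * PN m" if m: "m \<le> N0" for m
  proof (cases "2 \<le> m \<and> 0 < PN m")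
    case False
    then have "(\<Sum>k\<le>N0. gfun m k * pp m k) = 0" by (intro sum.neutral) (auto simp: gfun_def)
    then show ?thesis using c0 PN_nonneg[of m] by simp
  next
    case True
    then have m2: "2 \<le> m" and P: "0 < PN m" by auto
    define \<mu> where "\<mu> = mu m"
    have cmm: "cm m = \<mu>" using cm_eq[OF m d P] by (simp add: \<mu>_def)
    have rm: "2 \<le> real m" using m2 by simp
    have "(\<Sum>k\<le>N0. gfun m k * pp m k) = (\<Sum>k\<le>N0. real k * \<bar>\<mu> - real k\<bar> * pp m k) / (4 * (real m - 1))"
      using True by (simp add: gfun_def cmm sum_divide_distrib)
    also have "\<dots> \<le> \<mu> * (1 + sqrt \<mu>) * PN m / (4 * (real m - 1))"
      using absdev_bound[OF m d] rm by (intro divide_right_mono) (auto simp: \<mu>_def)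
    also have "\<dots> \<le> c * PN m"
    proof -
      have a: "\<mu> / (4 * (real m - 1)) \<le> real d0 / (2 * real N0)"
      proof -
        have "\<mu> / (4 * (real m - 1)) = real d0 / real N0 * (real m / (4 * (real m - 1)))"
          by (simp add: \<mu>_def mu_def)
        also have "real m / (4 * (real m - 1)) \<le> 1 / 2" using rm by (simp add: field_simps)
        then have "real d0 / real N0 * (real m / (4 * (real m - 1))) \<le> real d0 / real N0 * (1/2)"
          by (intro mult_left_mono) auto
        finally show ?thesis by simp
      qed
      have b: "1 + sqrt \<mu> \<le> 2 * sqrt (real dt)"
      proof -
        have "\<mu> \<le> real dt" using mu_le[OF m] dt by (simp add: \<mu>_def)
        then have s1: "sqrt \<mu> \<le> sqrt (real dt)" by simp
        have s2: "1 \<le> sqrt (real dt)" using d dt by simp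
        show ?thesis using s1 s2 by linarith
      qed
      have "\<mu> * (1 + sqrt \<mu>) * PN m / (4 * (real m - 1)) = (\<mu> / (4 * (real m - 1))) * ((1 + sqrt \<mu>) * PN m)"
        by simp
      also have "\<dots> \<le> (real d0 / (2 * real N0)) * ((2 * sqrt (real dt)) * PN m)"
        using a b P mu_nonneg[of m] rm by (intro mult_mono mult_right_mono) (auto simp: \<mu>_def)
      also have "\<dots> = c * PN m" by (simp add: c_def)
      finally show ?thesis .
    qed
    finally show ?thesis .
  qed
  have "(\<integral>\<omega>. gfun (Nn \<omega>) (Dn \<omega>) \<partial>\<Omega>) = (\<Sum>m\<le>N0. \<Sum>k\<le>N0. gfun m k * pp m k)"
    by (rule integral_ND)
  also have "\<dots> \<le> (\<Sum>m\<le>N0. c * PN m)"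
    using each by (intro sum_mono) auto
  also have "\<dots> = c" by (simp add: sum_distrib_left[symmetric] sum_PN)
  finally show ?thesis by (simp add: c_def)
qed

lemma xi2_bound:
  assumes \<omega>: "\<omega> \<in> space \<Omega>"
  shows "\<bar>xi2 \<Omega> n t v \<omega>\<bar> \<le> gfun (Nn \<omega>) (Dn \<omega>)"
proof -
  define m where "m = Nn \<omega>"
  define k where "k = Dn \<omega>"
  have mN: "m \<le> N0" using Nn_le by (simp add: m_def)
  define E where "E = {\<omega>'\<in>space \<Omega>. Nn \<omega>' = m}"
  have setE: "{\<omega>'\<in>space \<Omega>. atRisk n t v \<omega>' = atRisk n t v \<omega>} = E"
    by (simp add: atRisk_eq E_def m_def)
  have PE: "measure \<Omega> E = PN m" unfolding E_def by (rule PN_measure[OF mN])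
  define f1 where "f1 = (\<lambda>\<omega>'. atRiskTrt n t v \<omega>' * (atRisk n t v \<omega>' - atRiskTrt n t v \<omega>'))"
  define ce1 where "ce1 = condExpDisc \<Omega> f1 (atRisk n t v) \<omega>"
  define ce2 where "ce2 = condExpDisc \<Omega> (\<lambda>\<omega>'. atRisk n t v \<omega>' - events n t v \<omega>') (atRisk n t v) \<omega>"
  have xi: "xi2 \<Omega> n t v \<omega> = real k * ce1 / ((real m)^2 * (real m - 1)) * ((real m - real k) - ce2)"
    unfolding xi2_def ce1_def ce2_def f1_def by (simp add: atRisk_eq events_eq m_def k_def)
  have ce1_eq: "ce1 = (\<integral>\<omega>'. indicator E \<omega>' * f1 \<omega>' \<partial>\<Omega>) / PN m"
    unfolding ce1_def condExpDisc_def setE PE ..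
  show ?thesis
  proof (cases "2 \<le> m \<and> 0 < PN m")
    case False
    then have "PN m = 0 \<or> m = 0 \<or> m = 1" using PN_nonneg[of m] by auto
    then have "xi2 \<Omega> n t v \<omega> = 0"
    proof (elim disjE)
      assume "PN m = 0" then show ?thesis unfolding xi ce1_eq by simp
    qed (simp_all add: xi)
    then show ?thesis using gfun_nonneg by simp
  next
    case True
    then have m2: "2 \<le> m" and P: "0 < PN m" by auto
    have rm: "2 \<le> real m" using m2 by simp
    have f1_bounds: "0 \<le> indicator E \<omega>' * f1 \<omega>' \<and> indicator E \<omega>' * f1 \<omega>' \<le> (real m)^2 / 4 * indicator E \<omega>'" for \<omega>'
    proof (cases "\<omega>' \<in> E")
      case True
      then have N: "atRisk n t v \<omega>' = real m" by (simp add: E_def atRisk_eq)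
      define a where "a = atRiskTrt n t v \<omega>'"
      have a: "0 \<le> a" "a \<le> real m" using atRiskTrt_bounds[of \<omega>'] N by (simp_all add: a_def)
      have "a * (real m - a) \<le> (real m)^2 / 4"
      proof -
        have "0 \<le> (real m - 2 * a)^2" by simp
        then show ?thesis by (simp add: power2_eq_square algebra_simps)
      qed
      then show ?thesis using True a by (simp add: f1_def N a_def[symmetric])
    qed simp
    have I0: "0 \<le> (\<integral>\<omega>'. indicator E \<omega>' * f1 \<omega>' \<partial>\<Omega>)"
      using f1_bounds by (intro Bochner_Integration.integral_nonneg) auto
    have Esets: "E \<in> sets \<Omega>" unfolding E_def by (rule Nm_sets)
    have I1: "(\<integral>\<omega>'. indicator E \<omega>' * f1 \<omega>' \<partial>\<Omega>) \<le> (\<integral>\<omega>'. (real m)^2 / 4 * indicator E \<omega>' \<partial>\<Omega>)"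
      using f1_bounds Esets emeas_lt
      by (intro integral_mono') (auto intro!: integrable_mult_right integrable_real_indicator)
    also have "\<dots> = (real m)^2 / 4 * PN m"
      using Esets by (simp add: PE[symmetric] Int_absorb2 E_def)
    finally have I1': "(\<integral>\<omega>'. indicator E \<omega>' * f1 \<omega>' \<partial>\<Omega>) \<le> (real m)^2 / 4 * PN m" .
    have ce1_0: "0 \<le> ce1" using I0 P by (simp add: ce1_eq)
    have ce1_le: "ce1 \<le> (real m)^2 / 4" using I1' P by (simp add: ce1_eq field_simps)
    have ce2_eq: "ce2 = real m - cm m"
    proof -
      have "(\<integral>\<omega>'. indicator E \<omega>' * (atRisk n t v \<omega>' - events n t v \<omega>') \<partial>\<Omega>)
          = (\<integral>\<omega>'. indicator {\<omega>'\<in>space \<Omega>. Nn \<omega>' = m} \<omega>' * (\<lambda>a b. real a - real b) (Nn \<omega>') (Dn \<omega>') \<partial>\<Omega>)"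
        by (simp add: atRisk_eq events_eq E_def)
      also have "\<dots> = (\<Sum>k\<le>N0. (real m - real k) * pp m k)"
        by (rule cond_ND[OF mN])
      also have "\<dots> = real m * PN m - (\<Sum>k\<le>N0. real k * pp m k)"
        by (simp add: algebra_simps sum_subtractf sum_distrib_left PN_def)
      finally have "(\<integral>\<omega>'. indicator E \<omega>' * (atRisk n t v \<omega>' - events n t v \<omega>') \<partial>\<Omega>) = real m * PN m - (\<Sum>k\<le>N0. real k * pp m k)" .
      then show ?thesis
        unfolding ce2_def condExpDisc_def setE PE using P by (simp add: cm_def field_simps)
    qed
    have "\<bar>xi2 \<Omega> n t v \<omega>\<bar> = real k * ce1 / ((real m)^2 * (real m - 1)) * \<bar>cm m - real k\<bar>"
      unfolding xi ce2_eq using ce1_0 rm by (simp add: abs_mult)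
    also have "\<dots> \<le> real k * ((real m)^2 / 4) / ((real m)^2 * (real m - 1)) * \<bar>cm m - real k\<bar>"
      using ce1_le rm by (intro mult_right_mono divide_right_mono mult_left_mono) auto
    also have "\<dots> = gfun m k"
      using True rm by (simp add: gfun_def field_simps power2_eq_square)
    finally show ?thesis by (simp add: m_def k_def)
  qed
qed

lemma per_v:
  assumes d1: "1 \<le> tie_count n t v" and dt: "tie_count n t v \<le> dt"
  shows "\<exists>g. integrable \<Omega> g \<and> (\<forall>\<omega>\<in>space \<Omega>. \<bar>xi2 \<Omega> n t v \<omega>\<bar> \<le> g \<omega>) \<and>
     (\<integral>\<omega>. g \<omega> \<partial>\<Omega>) \<le> real (tie_count n t v) / real (card {i. i < n \<and> v \<le> t i}) * sqrt (real dt)"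
proof -
  have d0eq: "d0 = tie_count n t v" by (simp add: T_def tie_count_def)
  have N0eq: "N0 = card {i. i < n \<and> v \<le> t i}" by (simp add: A_def)
  show ?thesis
    using integrable_ND[of gfun] xi2_bound EG_bound[of dt] d1 dt
    unfolding d0eq N0eq by blast
qed

end

lemma harm0: "harm 0 = (0::real)" by (simp add: harm_def)

lemma harm_sum:
  fixes t :: "nat \<Rightarrow> real"
  shows "finite S \<Longrightarrow> (\<Sum>i\<in>S. 1 / real (card {j\<in>S. t i \<le> t j})) \<le> harm (card S)"
proof (induction "card S" arbitrary: S)
  case 0
  then show ?case by (simp add: harm0)
next
  case (Suc k)
  then have ne: "S \<noteq> {}" by auto
  define i0 where "i0 = (SOME i. i \<in> S \<and> t i = Min (t ` S))"
  have "Min (t ` S) \<in> t ` S"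
    using Suc.prems ne by (intro Min_in) auto
  then have "\<exists>i. i \<in> S \<and> t i = Min (t ` S)" by (metis imageE)
  then have i0: "i0 \<in> S" "t i0 = Min (t ` S)" unfolding i0_def by (metis (mono_tags, lifting) someI_ex)+
  have i0min: "j \<in> S \<Longrightarrow> t i0 \<le> t j" for j using i0 Suc.prems by simp
  define S' where "S' = S - {i0}"
  have finS': "finite S'" using Suc.prems by (simp add: S'_def)
  have cS': "card S' = k" using Suc.hyps(2) i0 Suc.prems by (simp add: S'_def)
  have IH: "(\<Sum>i\<in>S'. 1 / real (card {j\<in>S'. t i \<le> t j})) \<le> harm k"
    using Suc.hyps(1)[of S'] cS' finS' by simp
  have t0: "card {j\<in>S. t i0 \<le> t j} = Suc k"
  proof -
    have "{j\<in>S. t i0 \<le> t j} = S" using i0min by auto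
    then show ?thesis using Suc.hyps(2) by simp
  qed
  have mono: "1 / real (card {j\<in>S. t i \<le> t j}) \<le> 1 / real (card {j\<in>S'. t i \<le> t j})" if i: "i \<in> S'" for i
  proof -
    have "0 < card {j\<in>S'. t i \<le> t j}"
      using i finS' by (subst card_gt_0_iff) auto
    moreover have "card {j\<in>S'. t i \<le> t j} \<le> card {j\<in>S. t i \<le> t j}"
      using Suc.prems by (intro card_mono) (auto simp: S'_def)
    ultimately show ?thesis by (intro divide_left_mono) auto
  qed
  have "(\<Sum>i\<in>S. 1 / real (card {j\<in>S. t i \<le> t j}))
      = 1 / real (card {j\<in>S. t i0 \<le> t j}) + (\<Sum>i\<in>S'. 1 / real (card {j\<in>S. t i \<le> t j}))"
    using Suc.prems i0 by (simp add: S'_def sum.remove)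
  also have "\<dots> \<le> 1 / real (Suc k) + harm k"
    using IH sum_mono[of S' _ "\<lambda>i. 1 / real (card {j\<in>S'. t i \<le> t j})", OF mono] t0 by simp
  also have "\<dots> = harm (Suc k)" by (simp add: harm_Suc divide_inverse)
  finally show ?case using Suc.hyps(2) by simp
qed

lemma harm_le_ln: "1 \<le> n \<Longrightarrow> harm n \<le> 1 + ln (real n)"
proof -
  assume n: "1 \<le> n"
  obtain k where k: "n = Suc k" using n by (cases n) auto
  have "harm (Suc k) - ln (real (Suc k)) \<le> harm (Suc 0) - ln (real (Suc 0))"
    using decseqD[OF decseq_harm_diff_ln, of 0 k] by simp
  then show ?thesis using k by (simp add: harm_Suc harm0)
qed


lemma per_v_global:
  fixes G :: "(ennreal \<times> ennreal) measure"
  assumes "prob_space G" "sets G = sets (borel \<Otimes>\<^sub>M borel)" "0 \<le> v" "\<And>i. i < n \<Longrightarrow> 0 \<le> t i"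
    and d1: "1 \<le> tie_count n t v" and dt: "tie_count n t v \<le> dt"
  shows "\<exists>g. integrable (trial_space n p G) g \<and> (\<forall>\<omega>\<in>space (trial_space n p G). \<bar>xi2 (trial_space n p G) n t v \<omega>\<bar> \<le> g \<omega>) \<and>
     (\<integral>\<omega>. g \<omega> \<partial>(trial_space n p G)) \<le> real (tie_count n t v) / real (card {i. i < n \<and> v \<le> t i}) * sqrt (real dt)"
proof -
  have tr: "trial n G t v" using assms(1-4) by (simp add: trial_def)
  interpret trial n p G t v by (rule tr)
  show ?thesis by (rule per_v[OF d1 dt])
qed

lemma prob_trial_space:
  fixes G :: "(ennreal \<times> ennreal) measure"
  assumes "prob_space G"
  shows "prob_space (trial_space n p G)"
proof -
  have "prob_space (measure_pmf (bernoulli_pmf p) \<Otimes>\<^sub>M G)"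
    using assms by (intro prob_space_pair) (auto simp: prob_space_measure_pmf)
  then show ?thesis unfolding trial_space_def by (intro prob_space_PiM) auto
qed

lemma fiber_sum:
  fixes t :: "nat \<Rightarrow> real"
  shows "(\<Sum>v\<in>distinct_times n t. real (tie_count n t v) / real (card {i. i < n \<and> v \<le> t i}))
       = (\<Sum>i<n. 1 / real (card {j. j < n \<and> t i \<le> t j}))"
proof -
  have "(\<Sum>i<n. 1 / real (card {j. j < n \<and> t i \<le> t j}))
      = (\<Sum>v\<in>t ` {..<n}. \<Sum>i\<in>{x\<in>{..<n}. t x = v}. 1 / real (card {j. j < n \<and> t i \<le> t j}))"
    by (rule sum.image_gen) simp
  also have "\<dots> = (\<Sum>v\<in>t ` {..<n}. real (tie_count n t v) / real (card {i. i < n \<and> v \<le> t i}))"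
  proof (intro sum.cong refl)
    fix v assume v: "v \<in> t ` {..<n}"
    have "(\<Sum>i\<in>{x\<in>{..<n}. t x = v}. 1 / real (card {j. j < n \<and> t i \<le> t j}))
        = (\<Sum>i\<in>{x\<in>{..<n}. t x = v}. 1 / real (card {j. j < n \<and> v \<le> t j}))"
      by (intro sum.cong) auto
    also have "\<dots> = real (card {x\<in>{..<n}. t x = v}) * (1 / real (card {j. j < n \<and> v \<le> t j}))"
      by simp
    also have "card {x\<in>{..<n}. t x = v} = tie_count n t v"
      unfolding tie_count_def by (rule arg_cong[where f=card]) auto
    finally show "(\<Sum>i\<in>{x\<in>{..<n}. t x = v}. 1 / real (card {j. j < n \<and> t i \<le> t j}))
        = real (tie_count n t v) / real (card {i. i < n \<and> v \<le> t i})" by simp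
  qed
  finally show ?thesis by (simp add: distinct_times_def)
qed

lemma harm_bound_n:
  fixes t :: "nat \<Rightarrow> real"
  shows "(\<Sum>i<n. 1 / real (card {j. j < n \<and> t i \<le> t j})) \<le> harm n"
proof -
  have "(\<Sum>i\<in>{..<n}. 1 / real (card {j\<in>{..<n}. t i \<le> t j})) \<le> harm (card {..<n})"
    by (rule harm_sum) simp
  moreover have "{j\<in>{..<n}. t i \<le> t j} = {j. j < n \<and> t i \<le> t j}" for i by auto
  ultimately show ?thesis by simp
qed

lemma main_n:
  fixes t :: "nat \<Rightarrow> real" and G :: "(ennreal \<times> ennreal) measure" and B :: real
  assumes n3: "3 \<le> n" and tnn: "\<And>i. i < n \<Longrightarrow> 0 \<le> t i" and Gp: "prob_space G"
    and Gs: "sets G = sets (borel \<Otimes>\<^sub>M borel)" and B: "0 < B"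
  shows "measure (trial_space n p G) {\<omega> \<in> space (trial_space n p G).
           B < \<bar>xi2_sum (trial_space n p G) n t \<omega> / (sqrt (real (max_tie n t)) * ln (real n))\<bar>} \<le> 2 / B"
proof -
  define \<Omega> where "\<Omega> = trial_space n p G"
  define V where "V = distinct_times n t"
  define dt where "dt = max_tie n t"
  define Vs where "Vs = V - {Max V}"
  define Nv where "Nv v = card {i. i < n \<and> v \<le> t i}" for v
  have finV: "finite V" by (simp add: V_def distinct_times_def)
  have VsV: "Vs \<subseteq> V" by (auto simp: Vs_def)
  have finVs: "finite Vs" using finV VsV finite_subset by auto
  have tie_le: "tie_count n t v \<le> dt" if "v \<in> V" for v
    unfolding dt_def max_tie_def using that finV by (intro Max_ge) (auto simp: V_def)
  have tie_ge: "1 \<le> tie_count n t v" if vV: "v \<in> V" for v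
  proof -
    obtain i where i: "i < n" "t i = v" using vV by (auto simp: V_def distinct_times_def)
    have "{i. i < n \<and> t i = v} \<noteq> {}" using i by auto
    then show ?thesis unfolding tie_count_def by (simp add: Suc_le_eq card_gt_0_iff)
  qed
  have v_nn: "0 \<le> v" if "v \<in> V" for v using that tnn by (auto simp: V_def distinct_times_def)
  have "\<forall>v\<in>V. \<exists>g. integrable \<Omega> g \<and> (\<forall>\<omega>\<in>space \<Omega>. \<bar>xi2 \<Omega> n t v \<omega>\<bar> \<le> g \<omega>) \<and>
     (\<integral>\<omega>. g \<omega> \<partial>\<Omega>) \<le> real (tie_count n t v) / real (Nv v) * sqrt (real dt)"
  proof
    fix v assume v: "v \<in> V"
    show "\<exists>g. integrable \<Omega> g \<and> (\<forall>\<omega>\<in>space \<Omega>. \<bar>xi2 \<Omega> n t v \<omega>\<bar> \<le> g \<omega>) \<and>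
     (\<integral>\<omega>. g \<omega> \<partial>\<Omega>) \<le> real (tie_count n t v) / real (Nv v) * sqrt (real dt)"
      unfolding \<Omega>_def Nv_def by (rule per_v_global[OF Gp Gs v_nn[OF v] tnn tie_ge[OF v] tie_le[OF v]])
  qed
  from bchoice[OF this] obtain g where g0: "\<forall>v\<in>V. integrable \<Omega> (g v) \<and> (\<forall>\<omega>\<in>space \<Omega>. \<bar>xi2 \<Omega> n t v \<omega>\<bar> \<le> g v \<omega>) \<and>
     (\<integral>\<omega>. g v \<omega> \<partial>\<Omega>) \<le> real (tie_count n t v) / real (Nv v) * sqrt (real dt)"
    by blast
  then have g: "\<And>v. v \<in> V \<Longrightarrow> integrable \<Omega> (g v) \<and> (\<forall>\<omega>\<in>space \<Omega>. \<bar>xi2 \<Omega> n t v \<omega>\<bar> \<le> g v \<omega>) \<and>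
     (\<integral>\<omega>. g v \<omega> \<partial>\<Omega>) \<le> real (tie_count n t v) / real (Nv v) * sqrt (real dt)"
    by blast
  define Y where "Y \<omega> = (\<Sum>v\<in>Vs. g v \<omega>)" for \<omega>
  have intY: "integrable \<Omega> Y"
    unfolding Y_def using g VsV by (intro Bochner_Integration.integrable_sum) auto
  have absY: "\<bar>xi2_sum \<Omega> n t \<omega>\<bar> \<le> Y \<omega>" if \<omega>: "\<omega> \<in> space \<Omega>" for \<omega>
  proof -
    have "\<bar>xi2_sum \<Omega> n t \<omega>\<bar> \<le> (\<Sum>v\<in>Vs. \<bar>xi2 \<Omega> n t v \<omega>\<bar>)"
      unfolding xi2_sum_def Vs_def V_def by (rule sum_abs)
    also have "\<dots> \<le> Y \<omega>"
      unfolding Y_def using g VsV \<omega> by (intro sum_mono) auto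
    finally show ?thesis .
  qed
  have ln1: "1 \<le> ln (real n)"
  proof -
    have "exp 1 \<le> real n" using exp_le n3 by linarith
    then show ?thesis using n3 by (subst ln_ge_iff) auto
  qed
  have dt1: "1 \<le> dt"
  proof -
    have "t 0 \<in> V" using n3 by (auto simp: V_def distinct_times_def)
    then show ?thesis using tie_ge tie_le by (meson order_trans)
  qed
  have IY: "(\<integral>\<omega>. Y \<omega> \<partial>\<Omega>) \<le> 2 * (sqrt (real dt) * ln (real n))"
  proof -
    have "(\<integral>\<omega>. Y \<omega> \<partial>\<Omega>) = (\<Sum>v\<in>Vs. (\<integral>\<omega>. g v \<omega> \<partial>\<Omega>))"
      unfolding Y_def using g VsV by (intro Bochner_Integration.integral_sum) auto
    also have "\<dots> \<le> (\<Sum>v\<in>Vs. real (tie_count n t v) / real (Nv v) * sqrt (real dt))"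
      using g VsV by (intro sum_mono) auto
    also have "\<dots> \<le> (\<Sum>v\<in>V. real (tie_count n t v) / real (Nv v) * sqrt (real dt))"
      using finV VsV by (intro sum_mono2) auto
    also have "\<dots> = sqrt (real dt) * (\<Sum>v\<in>V. real (tie_count n t v) / real (Nv v))"
      by (simp add: sum_distrib_left mult.commute)
    also have "\<dots> \<le> sqrt (real dt) * (2 * ln (real n))"
    proof (rule mult_left_mono)
      have "(\<Sum>v\<in>V. real (tie_count n t v) / real (Nv v)) = (\<Sum>i<n. 1 / real (card {j. j < n \<and> t i \<le> t j}))"
        unfolding V_def Nv_def by (rule fiber_sum)
      also have "\<dots> \<le> harm n" by (rule harm_bound_n)
      also have "\<dots> \<le> 1 + ln (real n)" using n3 by (intro harm_le_ln) auto
      also have "\<dots> \<le> 2 * ln (real n)" using ln1 by simp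
      finally show "(\<Sum>v\<in>V. real (tie_count n t v) / real (Nv v)) \<le> 2 * ln (real n)" .
    qed simp
    finally show ?thesis by (simp add: algebra_simps)
  qed
  define c where "c = sqrt (real dt) * ln (real n)"
  have c0: "0 < c" using dt1 ln1 by (simp add: c_def)
  let ?S = "{\<omega> \<in> space \<Omega>. B < \<bar>xi2_sum \<Omega> n t \<omega> / c\<bar>}"
  let ?S' = "{\<omega> \<in> space \<Omega>. B \<le> Y \<omega> / c}"
  interpret P: prob_space \<Omega> unfolding \<Omega>_def using Gp by (rule prob_trial_space)
  have sub: "?S \<subseteq> ?S'"
  proof
    fix \<omega> assume "\<omega> \<in> ?S"
    then have \<omega>: "\<omega> \<in> space \<Omega>" and b: "B < \<bar>xi2_sum \<Omega> n t \<omega>\<bar> / c" using c0 by auto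
    have "\<bar>xi2_sum \<Omega> n t \<omega>\<bar> / c \<le> Y \<omega> / c" using absY[OF \<omega>] c0 by (simp add: divide_right_mono)
    then show "\<omega> \<in> ?S'" using \<omega> b by simp
  qed
  have intZ: "integrable \<Omega> (\<lambda>\<omega>. Y \<omega> / c)" using intY by simp
  have S'sets: "?S' \<in> sets \<Omega>"
    using borel_measurable_integrable[OF intZ] by measurable
  have "measure \<Omega> ?S \<le> measure \<Omega> ?S'"
  proof (cases "?S \<in> sets \<Omega>")
    case True then show ?thesis using sub S'sets by (intro P.finite_measure_mono) auto
  next
    case False then show ?thesis by (simp add: measure_notin_sets)
  qed
  also have "\<dots> \<le> (\<integral>\<omega>. Y \<omega> / c \<partial>\<Omega>) / B"
  proof -
    have nn: "AE \<omega> in \<Omega>. 0 \<le> Y \<omega> / c"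
    proof (intro AE_I2)
      fix \<omega> assume "\<omega> \<in> space \<Omega>"
      then have "0 \<le> Y \<omega>" using absY[of \<omega>] by linarith
      then show "0 \<le> Y \<omega> / c" using c0 by simp
    qed
    show ?thesis by (rule integral_Markov_inequality_measure[OF intZ _ nn B, of "space \<Omega>"]) simp
  qed
  also have "\<dots> = (\<integral>\<omega>. Y \<omega> \<partial>\<Omega>) / c / B" by simp
  also have "\<dots> \<le> 2 * c / c / B"
    using IY c0 B by (intro divide_right_mono) (auto simp: c_def)
  also have "\<dots> = 2 / B" using c0 by simp
  finally show ?thesis by (simp add: \<Omega>_def c_def dt_def)
qed

theorem lemmaA9:
  fixes t :: "nat \<Rightarrow> nat \<Rightarrow> real"
    and p :: "nat \<Rightarrow> real"
    and G :: "nat \<Rightarrow> (ennreal \<times> ennreal) measure"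
  assumes t_nonneg: "\<And>n i. i < n \<Longrightarrow> 0 \<le> t n i"
    and p_range: "\<And>n. 0 < p n \<and> p n < 1"
    and G_prob: "\<And>n. prob_space (G n)"
    and G_sets: "\<And>n. sets (G n) = sets (borel \<Otimes>\<^sub>M borel)"
  shows "bounded_in_prob (\<lambda>n. trial_space n (p n) (G n))
           (\<lambda>n \<omega>. xi2_sum (trial_space n (p n) (G n)) n (t n) \<omega>
                    / (sqrt (real (max_tie n (t n))) * ln (real n)))"
  unfolding bounded_in_prob_def
proof (intro allI impI)
  fix e :: real assume e: "0 < e"
  show "\<exists>B N. \<forall>n\<ge>N. measure (trial_space n (p n) (G n))
          {\<omega> \<in> space (trial_space n (p n) (G n)). B < \<bar>xi2_sum (trial_space n (p n) (G n)) n (t n) \<omega>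
             / (sqrt (real (max_tie n (t n))) * ln (real n))\<bar>} \<le> e"
  proof (intro exI[of _ "2 / e"] exI[of _ "3::nat"] allI impI)
    fix n :: nat assume n: "3 \<le> n"
    have "measure (trial_space n (p n) (G n))
          {\<omega> \<in> space (trial_space n (p n) (G n)). 2 / e < \<bar>xi2_sum (trial_space n (p n) (G n)) n (t n) \<omega>
             / (sqrt (real (max_tie n (t n))) * ln (real n))\<bar>} \<le> 2 / (2 / e)"
      using e by (intro main_n[OF n t_nonneg G_prob G_sets]) auto
    then show "measure (trial_space n (p n) (G n))
          {\<omega> \<in> space (trial_space n (p n) (G n)). 2 / e < \<bar>xi2_sum (trial_space n (p n) (G n)) n (t n) \<omega>
             / (sqrt (real (max_tie n (t n))) * ln (real n))\<bar>} \<le> e"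
      by simp
  qed
qed

end
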